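(* With the setting in the context, the set of vectors $\{\mathcal A_0|f\rangle : f\in\ker(\delta^0)\}$ is a basis of the ground state subspace $\mathcal H_0$. Moreover, for $f,g\in\ker(\delta^0)$ one has $\mathcal A_0|f\rangle=\mathcal A_0|g\rangle$ if and only if $f-g\in\mathrm{im}(\delta^{-1})$, so that $[f]\mapsto\mathcal A_0|f\rangle$ is a well-defined bijection from $H^0(C,G)=\ker\delta^0/\mathrm{im}\,\delta^{-1}$ onto this basis.
   Context: $(C_\bullet,\partial^C_\bullet)$ is a chain complex with each $C_n$ free abelian on a finite set $K_n$, $K_n\ne\emptyset$ for finitely many $n$; $(G_\bullet,\partial^G_\bullet)$ is a chain complex of finite abelian groups. $\mathrm{hom}(C,G)^p=\prod_n\mathrm{Hom}(C_n,G_{n-p})$ with $(\delta^pf)_n=f_{n-1}\partial^C_n-(-1)^p\partial^G_{n-p}f_n$. $\mathrm{hom}(C,G)_p=\mathrm{Hom}(\mathrm{hom}(C,G)^p,U(1))$ (written additively), $\chi_m(f)=m(f)$, $\delta_{p+1}m=m\circ\delta^p$. $\mathcal H=\bigotimes_n\bigotimes_{x\in K_n}\mathbb C[G_n]$ with orthonormal basis $|f\rangle$, $f\in\mathrm{hom}(C,G)^0$. $P_t|f\rangle=|f+t\rangle$, $Q_m|f\rangle=\chi_m(f)|f\rangle$; $A_t=P_{\delta^{-1}t}$ ($t\in\mathrm{hom}(C,G)^{-1}$), $B_m=Q_{\delta_1m}$ ($m\in\mathrm{hom}(C,G)_1$). $\mathcal A_0=\frac1{|\mathrm{hom}(C,G)^{-1}|}\sum_{t}A_t$.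 Local elements: for $x\in K_n$, $g\in G_{n-p}$, $gx^*\in\mathrm{hom}(C,G)^p$ has $n$-th component sending $x\mapsto g$ and other basis elements to $0$, other components $0$; for $r\in\mathrm{Hom}(G_{n-p},U(1))$, $rx_*(f)=r(f_n(x))$. $A_x^0=\frac1{|G_{n+1}|}\sum_{h\in G_{n+1}}A_{hx^*}$, $B_x^0=\frac1{|G_{n-1}|}\sum_{r\in\mathrm{Hom}(G_{n-1},U(1))}B_{rx_*}$ for $x\in K_n$; the ground state subspace is $\mathcal H_0=\{\Psi: A_x^0\Psi=B_x^0\Psi=\Psi\ \forall n,\forall x\in K_n\}$. *)

theory Defs
  imports Complex_Main "HOL-Library.Function_Algebras"
begin

text \<open>Chain complex C: free abelian on a finite set X of basis cells; deg x = n means x in K_n.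
  dC x y is the coefficient of y in the boundary of x.
  Coefficient complex G: subgroups Gc n of an ambient abelian group, with boundaries dG n : G_n -> G_(n-1).\<close>

definition zsmult :: "int \<Rightarrow> 'g::ab_group_add \<Rightarrow> 'g" where
  "zsmult k a = (if 0 \<le> k then (\<Sum>i<nat k. a) else - (\<Sum>i<nat (-k). a))"

definition chain_complex_C :: "'x set \<Rightarrow> ('x \<Rightarrow> int) \<Rightarrow> ('x \<Rightarrow> 'x \<Rightarrow> int) \<Rightarrow> bool" where
  "chain_complex_C X deg dC \<longleftrightarrow> finite X \<and>
     (\<forall>x y. dC x y \<noteq> 0 \<longrightarrow> x \<in> X \<and> y \<in> X \<and> deg y = deg x - 1) \<and>
     (\<forall>x z. (\<Sum>y\<in>X. dC x y * dC y z) = 0)"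

definition finite_subgroup :: "'g::ab_group_add set \<Rightarrow> bool" where
  "finite_subgroup S \<longleftrightarrow> finite S \<and> 0 \<in> S \<and> (\<forall>a\<in>S. \<forall>b\<in>S. a + b \<in> S) \<and> (\<forall>a\<in>S. - a \<in> S)"

definition chain_complex_G :: "(int \<Rightarrow> 'g::ab_group_add set) \<Rightarrow> (int \<Rightarrow> 'g \<Rightarrow> 'g) \<Rightarrow> bool" where
  "chain_complex_G Gc dG \<longleftrightarrow> (\<forall>n. finite_subgroup (Gc n)) \<and>
     (\<forall>n. \<forall>a\<in>Gc n. dG n a \<in> Gc (n - 1)) \<and>
     (\<forall>n. \<forall>a\<in>Gc n. \<forall>b\<in>Gc n. dG n (a + b) = dG n a + dG n b) \<and>
     (\<forall>n. \<forall>a\<in>Gc n. dG (n - 1) (dG n a) = 0)"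

text \<open>hom(C,G)^p: an element is a function on the basis cells, f x \<in> G_(deg x - p), zero off X.\<close>
definition cochains :: "'x set \<Rightarrow> ('x \<Rightarrow> int) \<Rightarrow> (int \<Rightarrow> 'g::ab_group_add set) \<Rightarrow> int \<Rightarrow> ('x \<Rightarrow> 'g) set" where
  "cochains X deg Gc p = {f. (\<forall>x\<in>X. f x \<in> Gc (deg x - p)) \<and> (\<forall>x. x \<notin> X \<longrightarrow> f x = 0)}"

text \<open>(\<delta>^p f)_n = f_(n-1) \<partial>^C_n - (-1)^p \<partial>^G_(n-p) f_n\<close>
definition coboundary :: "'x set \<Rightarrow> ('x \<Rightarrow> int) \<Rightarrow> ('x \<Rightarrow> 'x \<Rightarrow> int) \<Rightarrow> (int \<Rightarrow> 'g::ab_group_add \<Rightarrow> 'g)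
    \<Rightarrow> int \<Rightarrow> ('x \<Rightarrow> 'g) \<Rightarrow> ('x \<Rightarrow> 'g)" where
  "coboundary X deg dC dG p f = (\<lambda>x. if x \<in> X then
      (\<Sum>y\<in>X. zsmult (dC x y) (f y))
        - (if even p then dG (deg x - p) (f x) else - dG (deg x - p) (f x))
     else 0)"

text \<open>Characters (with values in U(1) as unit complex numbers); extended by 1 off the group.\<close>
definition characters :: "'a::ab_group_add set \<Rightarrow> ('a \<Rightarrow> complex) set" where
  "characters S = {r. (\<forall>a\<in>S. \<forall>b\<in>S. r (a + b) = r a * r b) \<and> (\<forall>a\<in>S. cmod (r a) = 1)
                      \<and> (\<forall>a. a \<notin> S \<longrightarrow> r a = 1)}"

text \<open>Hilbert space: complex functions on hom(C,G)^0; ket f is the basis vector |f>.\<close>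
type_synonym ('x, 'g) state = "('x \<Rightarrow> 'g) \<Rightarrow> complex"

definition Hspace :: "('x \<Rightarrow> 'g) set \<Rightarrow> ('x, 'g) state set" where
  "Hspace C0 = {\<Psi>. \<forall>f. f \<notin> C0 \<longrightarrow> \<Psi> f = 0}"

definition ket :: "('x \<Rightarrow> 'g) \<Rightarrow> ('x, 'g) state" where
  "ket f = (\<lambda>g. if g = f then 1 else 0)"

definition cscale :: "complex \<Rightarrow> ('x, 'g) state \<Rightarrow> ('x, 'g) state" where
  "cscale c \<Psi> = (\<lambda>f. c * \<Psi> f)"

text \<open>P_t |f> = |f + t>\<close>
definition Pop :: "('x \<Rightarrow> 'g::ab_group_add) \<Rightarrow> ('x, 'g) state \<Rightarrow> ('x, 'g) state" where
  "Pop t \<Psi> = (\<lambda>f. \<Psi> (\<lambda>x. f x - t x))"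

definition Qop :: "(('x \<Rightarrow> 'g) \<Rightarrow> complex) \<Rightarrow> ('x, 'g) state \<Rightarrow> ('x, 'g) state" where
  "Qop m \<Psi> = (\<lambda>f. m f * \<Psi> f)"

definition Aop where
  "Aop X deg dC dG t = Pop (coboundary X deg dC dG (-1) t)"

text \<open>B_m = Q_(\<delta>_1 m), \<delta>_1 m = m \<circ> \<delta>^0\<close>
definition Bop where
  "Bop X deg dC dG m = Qop (\<lambda>f. m (coboundary X deg dC dG 0 f))"

definition A_total :: "'x set \<Rightarrow> ('x \<Rightarrow> int) \<Rightarrow> ('x \<Rightarrow> 'x \<Rightarrow> int) \<Rightarrow> (int \<Rightarrow> 'g::ab_group_add set)
    \<Rightarrow> (int \<Rightarrow> 'g \<Rightarrow> 'g) \<Rightarrow> ('x, 'g) state \<Rightarrow> ('x, 'g) state" where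
  "A_total X deg dC Gc dG \<Psi> = cscale (1 / of_nat (card (cochains X deg Gc (-1))))
      (\<Sum>t\<in>cochains X deg Gc (-1). Aop X deg dC dG t \<Psi>)"

text \<open>h x^* : the cochain sending x to h and everything else to 0; r x_* (f) = r (f x).\<close>
definition loc_cochain :: "'x \<Rightarrow> 'g::zero \<Rightarrow> ('x \<Rightarrow> 'g)" where
  "loc_cochain x h = (\<lambda>y. if y = x then h else 0)"

definition A_vertex where
  "A_vertex X deg dC Gc dG x \<Psi> = cscale (1 / of_nat (card (Gc (deg x + 1))))
      (\<Sum>h\<in>Gc (deg x + 1). Aop X deg dC dG (loc_cochain x h) \<Psi>)"

definition B_vertex where
  "B_vertex X deg dC Gc dG x \<Psi> = cscale (1 / of_nat (card (characters (Gc (deg x - 1)))))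
      (\<Sum>r\<in>characters (Gc (deg x - 1)). Bop X deg dC dG (\<lambda>f. r (f x)) \<Psi>)"

definition ground_space where
  "ground_space X deg dC Gc dG = {\<Psi> \<in> Hspace (cochains X deg Gc 0).
      \<forall>x\<in>X. A_vertex X deg dC Gc dG x \<Psi> = \<Psi> \<and> B_vertex X deg dC Gc dG x \<Psi> = \<Psi>}"

definition cocycles0 where
  "cocycles0 X deg dC Gc dG = {f \<in> cochains X deg Gc 0. coboundary X deg dC dG 0 f = (\<lambda>x. 0)}"

definition coboundaries0 where
  "coboundaries0 X deg dC Gc dG = coboundary X deg dC dG (-1) ` cochains X deg Gc (-1)"

text \<open>H^0(C,G) as the set of cosets f + im \<delta>^(-1), f \<in> ker \<delta>^0.\<close>
definition cohomology0 where
  "cohomology0 X deg dC Gc dG =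
     (\<lambda>f. (\<lambda>t. (\<lambda>x. f x + t x)) ` coboundaries0 X deg dC Gc dG) ` cocycles0 X deg dC Gc dG"

end

theory Submission
  imports Defs "HOL-Library.FuncSet"
begin



lemma sum_fun_apply: "(sum F A :: 'a \<Rightarrow> 'b::comm_monoid_add) x = (\<Sum>a\<in>A. F a x)"
  by (induct A rule: infinite_finite_induct) auto

lemma idem_zero: assumes "(a::'a::ab_group_add) = a + a" shows "a = 0"
proof -
  have "a + a = a + 0" by (metis assms add.right_neutral)
  then show "a = 0" by (simp only: add_left_cancel)
qed

lemma zsmult_0_left[simp]: "zsmult 0 a = 0" by (simp add: zsmult_def)
lemma zsmult_0_right[simp]: "zsmult k 0 = 0" by (simp add: zsmult_def)
lemma zsmult_1[simp]: "zsmult 1 a = a" by (simp add: zsmult_def)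

lemma zsmult_plus1: "zsmult (k + 1) a = zsmult k a + a"
proof (cases "0 \<le> k")
  case True
  then have "nat (k+1) = Suc (nat k)" by simp
  then show ?thesis using True by (simp add: zsmult_def add.commute)
next
  case False
  then have e: "nat (-k) = Suc (nat (-(k+1)))" by simp
  show ?thesis
  proof (cases "k = -1")
    case True then show ?thesis by (simp add: zsmult_def)
  next
    case False
    with \<open>\<not> 0 \<le> k\<close> have "\<not> 0 \<le> k + 1" by simp
    then show ?thesis using \<open>\<not> 0 \<le> k\<close> e by (simp add: zsmult_def)
  qed
qed

lemma zsmult_minus1: "zsmult (k - 1) a = zsmult k a - a"
  using zsmult_plus1[of "k - 1" a] by (simp add: algebra_simps)

lemma zsmult_add_left: "zsmult (k + l) a = zsmult k a + zsmult l a"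
proof (induct l rule: int_induct[where k=0])
  case base then show ?case by simp
next
  case (step1 i) then show ?case using zsmult_plus1[of "k+i" a] zsmult_plus1[of i a]
    by (simp add: algebra_simps)
next
  case (step2 i)
  have e0: "zsmult (k + (i - 1)) a = zsmult (k + i) a - a" using zsmult_minus1[of "k+i" a]
    by (metis add_diff_eq)
  have e1: "zsmult (k + (i - 1)) a = zsmult k a + zsmult i a - a" using e0 step2(2) by simp
  have h2: "zsmult (i-1) a = zsmult i a - a" by (rule zsmult_minus1)
  show ?case by (simp only: e1 h2) (simp add: algebra_simps)
qed

lemma zsmult_neg_left: "zsmult (- k) a = - zsmult k a"
  using zsmult_add_left[of k "-k" a] by (simp add: eq_neg_iff_add_eq_0 add.commute)

lemma zsmult_diff_left: "zsmult (k - l) a = zsmult k a - zsmult l a"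
  using zsmult_add_left[of k "-l" a] by (simp add: zsmult_neg_left)

lemma zsmult_add_right: "zsmult k (a + b) = zsmult k a + zsmult k b"
proof (induct k rule: int_induct[where k=0])
  case base then show ?case by simp
next
  case (step1 i) then show ?case by (simp only: zsmult_plus1 step1(2)) (simp add: algebra_simps)
next
  case (step2 i) then show ?case by (simp only: zsmult_minus1 step2(2)) (simp add: algebra_simps)
qed

lemma zsmult_neg_right: "zsmult k (- a) = - zsmult k a"
  using zsmult_add_right[of k a "-a"] by (simp add: eq_neg_iff_add_eq_0 add.commute)

lemma zsmult_diff_right: "zsmult k (a - b) = zsmult k a - zsmult k b"
  using zsmult_add_right[of k a "-b"] by (simp add: zsmult_neg_right)

lemma zsmult_mult: "zsmult (k * l) a = zsmult k (zsmult l a)"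
proof (induct k rule: int_induct[where k=0])
  case base then show ?case by simp
next
  case (step1 i)
  have "(i+1)*l = i*l + l" by (simp add: distrib_right)
  then show ?case by (simp only: zsmult_add_left step1(2) zsmult_plus1 zsmult_1)
next
  case (step2 i)
  have "(i-1)*l = i*l - l" by (simp add: left_diff_distrib)
  then show ?case by (simp only: zsmult_diff_left step2(2) zsmult_minus1 zsmult_1)
qed

lemma zsmult_sum_right: "zsmult k (\<Sum>i\<in>A. f i) = (\<Sum>i\<in>A. zsmult k (f i))"
  by (induct A rule: infinite_finite_induct) (auto simp: zsmult_add_right)

lemma zsmult_sum_left: "zsmult (\<Sum>i\<in>A. f i) a = (\<Sum>i\<in>A. zsmult (f i) a)"
  by (induct A rule: infinite_finite_induct) (auto simp: zsmult_add_left)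

lemma finite_subgroup_diff: "finite_subgroup S \<Longrightarrow> a \<in> S \<Longrightarrow> b \<in> S \<Longrightarrow> a - b \<in> S"
  unfolding finite_subgroup_def by (metis diff_conv_add_uminus)

lemma finite_subgroup_sum: "finite_subgroup S \<Longrightarrow> (\<And>i. i \<in> A \<Longrightarrow> f i \<in> S) \<Longrightarrow> (\<Sum>i\<in>A. f i) \<in> S"
  unfolding finite_subgroup_def by (induct A rule: infinite_finite_induct) auto

lemma zsmult_in: assumes "finite_subgroup S" "a \<in> S" shows "zsmult k a \<in> S"
proof (induct k rule: int_induct[where k=0])
  case base then show ?case using assms by (simp add: finite_subgroup_def)
next
  case (step1 i) then show ?case using assms by (simp add: zsmult_plus1 finite_subgroup_def)
next
  case (step2 i) then show ?case using assms by (simp add: zsmult_minus1 finite_subgroup_diff)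
qed

lemma hom_zsmult:
  assumes S: "finite_subgroup S" and a: "a \<in> S"
    and h: "\<And>x y. x \<in> S \<Longrightarrow> y \<in> S \<Longrightarrow> \<phi> (x + y) = \<phi> x + \<phi> y"
  shows "\<phi> (zsmult k a) = zsmult k (\<phi> a)"
proof -
  have "\<phi> (0 + 0) = \<phi> 0 + \<phi> 0" using S by (intro h) (auto simp: finite_subgroup_def)
  then have "\<phi> 0 = \<phi> 0 + \<phi> 0" unfolding add_0 .
  then have z: "\<phi> 0 = 0" by (rule idem_zero)
  have d: "\<phi> (x - y) = \<phi> x - \<phi> y" if "x \<in> S" "y \<in> S" for x y
  proof -
    have "\<phi> (x - y + y) = \<phi> (x - y) + \<phi> y" using h[of "x - y" y] that S finite_subgroup_diff by blast
    then show ?thesis by (simp add: eq_diff_eq)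
  qed
  show ?thesis
  proof (induct k rule: int_induct[where k=0])
    case base then show ?case using z by simp
  next
    case (step1 i) then show ?case by (simp only: zsmult_plus1 h[OF zsmult_in[OF S a] a])
  next
    case (step2 i) then show ?case by (simp only: zsmult_minus1 d[OF zsmult_in[OF S a] a])
  qed
qed

lemma hom_sum:
  fixes \<phi> :: "'g::ab_group_add \<Rightarrow> 'h::ab_group_add"
  assumes S: "finite_subgroup S" and f: "\<And>i. i \<in> A \<Longrightarrow> f i \<in> S"
    and h: "\<And>x y. x \<in> S \<Longrightarrow> y \<in> S \<Longrightarrow> \<phi> (x + y) = \<phi> x + \<phi> y"
  shows "\<phi> (\<Sum>i\<in>A. f i) = (\<Sum>i\<in>A. \<phi> (f i))"
proof -
  have "\<phi> (0 + 0) = \<phi> 0 + \<phi> 0" using S by (intro h) (auto simp: finite_subgroup_def)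
  then have "\<phi> 0 = \<phi> 0 + \<phi> 0" unfolding add_0 .
  then have z: "\<phi> 0 = 0" by (rule idem_zero)
  show ?thesis using f
  proof (induct A rule: infinite_finite_induct)
    case (insert x F)
    have fF: "\<And>i. i \<in> F \<Longrightarrow> f i \<in> S" using insert(4) by auto
    have IH: "\<phi> (\<Sum>i\<in>F. f i) = (\<Sum>i\<in>F. \<phi> (f i))" using insert(3)[OF fF] .
    have "\<phi> (f x + (\<Sum>i\<in>F. f i)) = \<phi> (f x) + \<phi> (\<Sum>i\<in>F. f i)"
      using insert(4) finite_subgroup_sum[OF S, of F f] fF by (intro h) auto
    then show ?case by (simp only: sum.insert[OF insert(1,2)] IH)
  qed (auto simp: z)
qed




definition char_on :: "'g::ab_group_add set \<Rightarrow> ('g \<Rightarrow> complex) \<Rightarrow> bool" where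
  "char_on H r \<longleftrightarrow> (\<forall>a\<in>H. \<forall>b\<in>H. r (a + b) = r a * r b) \<and> (\<forall>a\<in>H. cmod (r a) = 1)"

lemma char_on_zero: assumes "finite_subgroup H" "char_on H r" shows "r 0 = 1"
proof -
  have "r (0 + 0) = r 0 * r 0" "cmod (r 0) = 1" using assms by (auto simp: char_on_def finite_subgroup_def)
  then have "r 0 * 1 = r 0 * r 0" "r 0 \<noteq> 0" by auto
  then show ?thesis by (metis mult_left_cancel)
qed

lemma char_on_neg: assumes H: "finite_subgroup H" and r: "char_on H r" and a: "a \<in> H"
  shows "r (- a) = inverse (r a)"
proof -
  have "-a \<in> H" using H a by (auto simp: finite_subgroup_def)
  then have "r (a + - a) = r a * r (- a)" using r a unfolding char_on_def by blast
  then have "r a * r (- a) = 1" using char_on_zero[OF H r] by simp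
  then show ?thesis by (metis inverse_unique mult.commute)
qed

lemma char_on_zsmult: assumes H: "finite_subgroup H" and r: "char_on H r" and a: "a \<in> H"
  shows "r (zsmult k a) = r a powi k"
proof -
  have nz: "r a \<noteq> 0" using r a by (auto simp: char_on_def)
  show ?thesis
  proof (induct k rule: int_induct[where k=0])
    case base then show ?case using char_on_zero[OF H r] by simp
  next
    case (step1 i)
    have "r (zsmult i a + a) = r (zsmult i a) * r a" using r a zsmult_in[OF H a] by (auto simp: char_on_def)
    then show ?case using step1(2) nz by (simp add: zsmult_plus1 power_int_add_1)
  next
    case (step2 i)
    have "- a \<in> H" using H a by (auto simp: finite_subgroup_def)
    then have "r (zsmult i a + - a) = r (zsmult i a) * r (- a)" using r a zsmult_in[OF H a]
      unfolding char_on_def by blast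
    then have "r (zsmult i a - a) = r (zsmult i a) * r (- a)" by (simp only: diff_conv_add_uminus)
    then show ?case using step2(2) nz char_on_neg[OF H r a]
      by (simp add: zsmult_minus1 power_int_diff divide_inverse)
  qed
qed

lemma zsmult_order: assumes S: "finite_subgroup S" and g: "g \<in> S"
  shows "\<exists>k::nat. k > 0 \<and> k \<le> card S \<and> zsmult (int k) g = 0"
proof -
  let ?f = "\<lambda>n::nat. zsmult (int n) g"
  have fin: "finite S" using S by (simp add: finite_subgroup_def)
  have "\<not> inj_on ?f {..card S}"
  proof
    assume "inj_on ?f {..card S}"
    then have "card {..card S} \<le> card S" using zsmult_in[OF S g] fin by (intro card_inj_on_le) auto
    then show False by simp
  qed
  then obtain i j where ij: "i \<noteq> j" "?f i = ?f j" "i \<le> card S" "j \<le> card S"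
    unfolding inj_on_def by blast
  show ?thesis
  proof (cases "i < j")
    case True
    have "zsmult (int (j - i)) g = zsmult (int j) g - zsmult (int i) g"
      using True by (simp add: of_nat_diff zsmult_diff_left)
    then show ?thesis using ij True by (intro exI[of _ "j - i"]) auto
  next
    case False
    have "zsmult (int (i - j)) g = zsmult (int i) g - zsmult (int j) g"
      using False by (simp add: of_nat_diff zsmult_diff_left)
    then show ?thesis using ij False by (intro exI[of _ "i - j"]) auto
  qed
qed

lemma complex_root_unit: assumes "cmod z = 1" "m > 0" shows "\<exists>w::complex. w ^ m = z"
proof -
  have z0: "z \<noteq> 0" using assms by auto
  have "cis (Arg z) = z" using cis_Arg[OF z0] assms by (simp add: sgn_eq)
  moreover have "cis (Arg z / m) ^ m = cis (Arg z)" using assms by (simp add: DeMoivre)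
  ultimately show ?thesis by metis
qed

definition ext_grp :: "'g::ab_group_add set \<Rightarrow> 'g \<Rightarrow> 'g set" where
  "ext_grp H g = {h + zsmult k g | h k. h \<in> H}"

lemma ext_grp_subgroup: assumes H: "finite_subgroup H" and S: "finite_subgroup S" and HS: "H \<subseteq> S"
    and g: "g \<in> S"
  shows "finite_subgroup (ext_grp H g)" "ext_grp H g \<subseteq> S" "H \<subseteq> ext_grp H g" "g \<in> ext_grp H g"
proof -
  show sub: "ext_grp H g \<subseteq> S"
  proof
    fix y assume "y \<in> ext_grp H g"
    then obtain h k where "h \<in> H" "y = h + zsmult k g" by (auto simp: ext_grp_def)
    then show "y \<in> S" using HS zsmult_in[OF S g] S by (auto simp: finite_subgroup_def)
  qed
  show "H \<subseteq> ext_grp H g" unfolding ext_grp_def by (force intro: exI[of _ 0])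
  show "g \<in> ext_grp H g" unfolding ext_grp_def using H
    by (auto simp: finite_subgroup_def intro!: exI[of _ 0] exI[of _ 1])
  show "finite_subgroup (ext_grp H g)" unfolding finite_subgroup_def
  proof (intro conjI ballI)
    show "finite (ext_grp H g)" using sub S by (auto simp: finite_subgroup_def intro: finite_subset)
    show "0 \<in> ext_grp H g" unfolding ext_grp_def using H
      by (auto simp: finite_subgroup_def intro!: exI[of _ 0])
  next
    fix a b assume "a \<in> ext_grp H g" "b \<in> ext_grp H g"
    then obtain h1 k1 h2 k2 where "h1 \<in> H" "a = h1 + zsmult k1 g" "h2 \<in> H" "b = h2 + zsmult k2 g"
      by (auto simp: ext_grp_def)
    then have "a + b = (h1 + h2) + zsmult (k1 + k2) g" "h1 + h2 \<in> H"
      using H by (auto simp: zsmult_add_left finite_subgroup_def algebra_simps)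
    then show "a + b \<in> ext_grp H g" unfolding ext_grp_def by blast
  next
    fix a assume "a \<in> ext_grp H g"
    then obtain h1 k1 where "h1 \<in> H" "a = h1 + zsmult k1 g"
      by (auto simp: ext_grp_def)
    then have "- a = (- h1) + zsmult (- k1) g" "- h1 \<in> H"
      using H by (auto simp: zsmult_neg_left finite_subgroup_def algebra_simps)
    then show "- a \<in> ext_grp H g" unfolding ext_grp_def by blast
  qed
qed

lemma ext_step:
  assumes H: "finite_subgroup H" and S: "finite_subgroup S" and HS: "H \<subseteq> S"
    and g: "g \<in> S" and r: "char_on H r"
    and m: "m > 0" "zsmult (int m) g \<in> H" "\<forall>j. 0 < j \<and> j < m \<longrightarrow> zsmult (int j) g \<notin> H"
    and w: "w ^ m = r (zsmult (int m) g)"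
  shows "\<exists>r'. char_on (ext_grp H g) r' \<and> (\<forall>a\<in>H. r' a = r a) \<and> r' g = w"
proof -
  have nw: "cmod w = 1"
  proof -
    have "cmod (w ^ m) = 1" using w m r by (simp add: char_on_def)
    then have "cmod w ^ m = 1" by (simp add: norm_power)
    then have "cmod w ^ m = 1 ^ m" by simp
    then show ?thesis by (rule power_eq_imp_eq_base) (use m in auto)
  qed
  then have w0: "w \<noteq> 0" by auto
  let ?G0 = "zsmult (int m) g"
  have key: "r (zsmult k g) = w powi k" if k: "zsmult k g \<in> H" for k
  proof -
    define q where "q = k div int m"
    define s where "s = k mod int m"
    have k_eq: "k = q * int m + s" unfolding q_def s_def by simp
    have s_rng: "0 \<le> s" "s < int m" using m unfolding s_def by auto
    have zs: "zsmult k g = zsmult q ?G0 + zsmult s g"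
      unfolding k_eq by (simp add: zsmult_add_left zsmult_mult)
    have "zsmult s g = zsmult k g - zsmult q ?G0" using zs by (simp add: algebra_simps)
    then have "zsmult s g \<in> H" using k zsmult_in[OF H m(2)] finite_subgroup_diff[OF H] by simp
    then have "s = 0"
    proof (rule contrapos_pp)
      assume "s \<noteq> 0"
      then have "0 < nat s" "nat s < m" using s_rng by auto
      then have "zsmult (int (nat s)) g \<notin> H" using m(3) by blast
      moreover have "int (nat s) = s" using s_rng by simp
      ultimately show "zsmult s g \<notin> H" by simp
    qed
    then have "zsmult k g = zsmult q ?G0" using zs by simp
    then have "r (zsmult k g) = r ?G0 powi q" using char_on_zsmult[OF H r m(2)] by simp
    also have "\<dots> = (w powi int m) powi q" using w by simp
    also have "\<dots> = w powi (int m * q)" by (rule power_int_mult[symmetric])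
    also have "\<dots> = w powi k" using \<open>s = 0\<close> k_eq by (simp add: mult.commute)
    finally show ?thesis .
  qed
  have wd: "r h * w powi k = r h' * w powi k'"
    if "h \<in> H" "h' \<in> H" "h + zsmult k g = h' + zsmult k' g" for h h' k k'
  proof -
    have e: "zsmult (k - k') g = h' - h" using that(3) by (simp add: zsmult_diff_left algebra_simps)
    then have "zsmult (k - k') g \<in> H" using that finite_subgroup_diff[OF H] by simp
    then have "r (zsmult (k - k') g) = w powi (k - k')" by (rule key)
    then have "r (h' - h) = w powi (k - k')" by (simp only: e)
    moreover have "r h' = r h * r (h' - h)" using r that finite_subgroup_diff[OF H, of h' h]
      by (metis char_on_def add.commute diff_add_cancel)
    ultimately show ?thesis using w0 by (simp add: power_int_diff)
  qed
  define r' where "r' y = (SOME c. \<exists>h k. h \<in> H \<and> y = h + zsmult k g \<and> c = r h * w powi k)" for y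
  have r'_val: "r' (h + zsmult k g) = r h * w powi k" if "h \<in> H" for h k
  proof -
    have "\<exists>c. \<exists>h' k'. h' \<in> H \<and> h + zsmult k g = h' + zsmult k' g \<and> c = r h' * w powi k'"
      using that by blast
    then have "\<exists>h' k'. h' \<in> H \<and> h + zsmult k g = h' + zsmult k' g \<and> r' (h + zsmult k g) = r h' * w powi k'"
      unfolding r'_def by (rule someI_ex)
    then show ?thesis using wd that by metis
  qed
  have "char_on (ext_grp H g) r'" unfolding char_on_def
  proof (intro conjI ballI)
    fix a b assume "a \<in> ext_grp H g" "b \<in> ext_grp H g"
    then obtain h1 k1 h2 k2 where hh: "h1 \<in> H" "a = h1 + zsmult k1 g" "h2 \<in> H" "b = h2 + zsmult k2 g"
      by (auto simp: ext_grp_def)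
    then have "a + b = (h1 + h2) + zsmult (k1 + k2) g" "h1 + h2 \<in> H"
      using H by (auto simp: zsmult_add_left finite_subgroup_def algebra_simps)
    then have "r' (a + b) = r (h1 + h2) * w powi (k1 + k2)" using r'_val by simp
    also have "\<dots> = (r h1 * w powi k1) * (r h2 * w powi k2)"
      using r hh w0 by (simp add: char_on_def power_int_add)
    finally show "r' (a + b) = r' a * r' b" using hh r'_val by simp
  next
    fix a assume "a \<in> ext_grp H g"
    then obtain h1 k1 where hh: "h1 \<in> H" "a = h1 + zsmult k1 g" by (auto simp: ext_grp_def)
    then show "cmod (r' a) = 1" using r'_val r nw by (simp add: char_on_def norm_mult norm_power_int)
  qed
  moreover have "\<forall>a\<in>H. r' a = r a" using r'_val[of _ 0] by simp
  moreover have "r' g = w" using r'_val[of 0 1] H char_on_zero[OF H r] by (simp add: finite_subgroup_def)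
  ultimately show ?thesis by blast
qed

lemma least_m: assumes H: "finite_subgroup H" and S: "finite_subgroup S" and g: "g \<in> S"
  shows "\<exists>m. m > 0 \<and> zsmult (int m) g \<in> H \<and> (\<forall>j. 0 < j \<and> j < m \<longrightarrow> zsmult (int j) g \<notin> H)"
proof -
  obtain k :: nat where k: "k > 0" "zsmult (int k) g = 0" using zsmult_order[OF S g] by blast
  let ?P = "\<lambda>m. m > 0 \<and> zsmult (int m) g \<in> H"
  have Pk: "?P k" using k H by (simp add: finite_subgroup_def)
  then have "?P (LEAST m. ?P m)" by (rule LeastI)
  moreover have "\<forall>j. 0 < j \<and> j < (LEAST m. ?P m) \<longrightarrow> zsmult (int j) g \<notin> H"
    using not_less_Least by blast
  ultimately show ?thesis by blast
qed

lemma ext_all: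
  assumes S: "finite_subgroup S"
  shows "finite_subgroup H \<Longrightarrow> H \<subseteq> S \<Longrightarrow> char_on H r \<Longrightarrow> \<exists>r'. char_on S r' \<and> (\<forall>a\<in>H. r' a = r a)"
proof (induct "card (S - H)" arbitrary: H r rule: less_induct)
  case less
  show ?case
  proof (cases "H = S")
    case True then show ?thesis using less by blast
  next
    case False
    then obtain g where g: "g \<in> S" "g \<notin> H" using less(3) by blast
    obtain m where m: "m > 0" "zsmult (int m) g \<in> H" "\<forall>j. 0 < j \<and> j < m \<longrightarrow> zsmult (int j) g \<notin> H"
      using least_m[OF less(2) S g(1)] by blast
    have "cmod (r (zsmult (int m) g)) = 1" using less(4) m(2) by (simp add: char_on_def)
    then obtain w where w: "w ^ m = r (zsmult (int m) g)" using complex_root_unit m(1) by blast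
    obtain r1 where r1: "char_on (ext_grp H g) r1" "\<forall>a\<in>H. r1 a = r a"
      using ext_step[OF less(2) S less(3) g(1) less(4) m w] by blast
    note E = ext_grp_subgroup[OF less(2) S less(3) g(1)]
    have fin: "finite S" using S by (simp add: finite_subgroup_def)
    have "S - ext_grp H g \<subset> S - H" using E g by blast
    then have "card (S - ext_grp H g) < card (S - H)" using fin by (intro psubset_card_mono) auto
    then obtain r2 where "char_on S r2" "\<forall>a\<in>ext_grp H g. r2 a = r1 a"
      using less(1)[OF _ E(1) E(2) r1(1)] by blast
    then show ?thesis using r1 E(3) by (intro exI[of _ r2]) auto
  qed
qed

lemma char_separate:
  assumes S: "finite_subgroup S" and a: "a \<in> S" "a \<noteq> 0"
  shows "\<exists>r\<in>characters S. r a \<noteq> 1"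
proof -
  have H0: "finite_subgroup {0::'a}" by (simp add: finite_subgroup_def)
  have c0: "char_on {0} (\<lambda>_. 1)" by (simp add: char_on_def)
  obtain m where m: "m > 0" "zsmult (int m) a \<in> {0}" "\<forall>j. 0 < j \<and> j < m \<longrightarrow> zsmult (int j) a \<notin> {0}"
    using least_m[OF H0 S a(1)] by blast
  have m2: "m \<noteq> 1" using m(2) a(2) by auto
  let ?w = "cis (2 * pi * real 1 / real m)"
  have "?w ^ m = cis (real m * (2 * pi * real 1 / real m))" by (rule DeMoivre)
  also have "\<dots> = cis (2 * pi)" using m(1) by simp
  also have "\<dots> = 1" by (simp add: complex_eq_iff)
  finally have w: "?w ^ m = (\<lambda>_. 1) (zsmult (int m) a)" by simp
  have "?w \<noteq> cis (2 * pi * real 0 / real m)"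
  proof
    assume "?w = cis (2 * pi * real 0 / real m)"
    moreover have inj: "inj_on (\<lambda>k. cis (2 * pi * real k / real m)) {..<m}"
      using bij_betw_roots_unity[OF m(1)] by (simp add: bij_betw_def)
    moreover have "1 < m" using m(1) m2 by simp
    ultimately have "(1::nat) = 0" using inj_onD[OF inj, of 1 0] m(1) by simp
    then show False by simp
  qed
  then have w1: "?w \<noteq> 1" by simp
  have "{0} \<subseteq> S" using S by (simp add: finite_subgroup_def)
  obtain r1 where r1: "char_on (ext_grp {0} a) r1" "r1 a = ?w"
    using ext_step[OF H0 S \<open>{0} \<subseteq> S\<close> a(1) c0 m w] by blast
  note E = ext_grp_subgroup[OF H0 S \<open>{0} \<subseteq> S\<close> a(1)]
  obtain r2 where r2: "char_on S r2" "\<forall>b\<in>ext_grp {0} a. r2 b = r1 b"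
    using ext_all[OF S E(1) E(2) r1(1)] by blast
  define r where "r b = (if b \<in> S then r2 b else 1)" for b
  have "r \<in> characters S" using r2(1) S
    by (auto simp: characters_def r_def char_on_def finite_subgroup_def)
  moreover have "r a = ?w" using r2 E(4) r1(2) a by (simp add: r_def)
  ultimately show ?thesis using w1 by (intro bexI[of _ r]) auto
qed

lemma char_one: "finite_subgroup S \<Longrightarrow> r \<in> characters S \<Longrightarrow> r 0 = 1"
  by (rule char_on_zero) (auto simp: characters_def char_on_def)

lemma characters_const1: "(\<lambda>_. 1) \<in> characters S"
  by (simp add: characters_def)

lemma characters_finite: assumes S: "finite_subgroup S" shows "finite (characters S)"
proof -
  have fin: "finite S" using S by (simp add: finite_subgroup_def)
  define R where "R = (\<Union>k\<in>{1..card S}. {z::complex. z ^ k = 1})"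
  have finR: "finite R" unfolding R_def by (auto intro: finite_roots_unity)
  have vals: "r a \<in> R" if r: "r \<in> characters S" and a: "a \<in> S" for r a
  proof -
    have ch: "char_on S r" using r by (simp add: characters_def char_on_def)
    obtain k where k: "k > 0" "k \<le> card S" "zsmult (int k) a = 0" using zsmult_order[OF S a] by blast
    then have "r a ^ k = 1" using char_on_zsmult[OF S ch a, of "int k"] char_on_zero[OF S ch]
      by simp
    moreover have "k \<in> {1..card S}" using k by auto
    ultimately show ?thesis unfolding R_def by blast
  qed
  let ?F = "\<lambda>h b. if b \<in> S then h b else 1"
  have "characters S \<subseteq> ?F ` (PiE S (\<lambda>_. R))"
  proof
    fix r assume r: "r \<in> characters S"
    have "r = ?F (restrict r S)" using r by (intro ext) (auto simp: characters_def restrict_def)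
    moreover have "restrict r S \<in> PiE S (\<lambda>_. R)" using vals r by auto
    ultimately show "r \<in> ?F ` (PiE S (\<lambda>_. R))" by blast
  qed
  moreover have "finite (PiE S (\<lambda>_. R))" using fin finR by (intro finite_PiE) auto
  ultimately show ?thesis by (rule finite_subset[OF _ finite_imageI])
qed




lemma sum_indicator_card: "finite A \<Longrightarrow> (\<Sum>t\<in>A. if P t then (1::complex) else 0) = of_nat (card {t\<in>A. P t})"
proof -
  assume True: "finite A"
  have "(\<Sum>t\<in>A. if P t then (1::complex) else 0) = (\<Sum>t\<in>{t\<in>A. P t}. 1)"
    using sum.inter_filter[OF True, of "\<lambda>_. (1::complex)" P] by simp
  then show ?thesis by simp
qed

interpretation cs: module cscale
  by unfold_locales (auto simp: cscale_def plus_fun_def algebra_simps fun_eq_iff)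

locale setting =
  fixes X :: "'x set" and deg :: "'x \<Rightarrow> int" and dC :: "'x \<Rightarrow> 'x \<Rightarrow> int"
    and Gc :: "int \<Rightarrow> 'g::ab_group_add set" and dG :: "int \<Rightarrow> 'g \<Rightarrow> 'g"
  assumes cC: "chain_complex_C X deg dC"
    and cG: "chain_complex_G Gc dG"
begin

abbreviation "C p \<equiv> cochains X deg Gc p"
abbreviation "\<delta> p \<equiv> coboundary X deg dC dG p"

lemma finX: "finite X" using cC by (simp add: chain_complex_C_def)
lemma dC_nz: "dC x y \<noteq> 0 \<Longrightarrow> x \<in> X \<and> y \<in> X \<and> deg y = deg x - 1"
  using cC by (simp add: chain_complex_C_def)
lemma dCdC: "(\<Sum>y\<in>X. dC x y * dC y z) = 0"
  using cC by (simp add: chain_complex_C_def)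

lemma sub: "finite_subgroup (Gc n)" using cG by (simp add: chain_complex_G_def)
lemma dG_in: "a \<in> Gc n \<Longrightarrow> dG n a \<in> Gc (n - 1)" using cG by (simp add: chain_complex_G_def)
lemma dG_add: "a \<in> Gc n \<Longrightarrow> b \<in> Gc n \<Longrightarrow> dG n (a + b) = dG n a + dG n b"
  using cG by (simp add: chain_complex_G_def)
lemma dGdG: "a \<in> Gc n \<Longrightarrow> dG (n - 1) (dG n a) = 0" using cG by (simp add: chain_complex_G_def)

lemma G0: "0 \<in> Gc n" using sub[of n] by (simp add: finite_subgroup_def)
lemma Gadd: "a \<in> Gc n \<Longrightarrow> b \<in> Gc n \<Longrightarrow> a + b \<in> Gc n" using sub[of n] by (simp add: finite_subgroup_def)
lemma Gneg: "a \<in> Gc n \<Longrightarrow> - a \<in> Gc n" using sub[of n] by (simp add: finite_subgroup_def)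
lemma Gdiff: "a \<in> Gc n \<Longrightarrow> b \<in> Gc n \<Longrightarrow> a - b \<in> Gc n" using finite_subgroup_diff[OF sub] .
lemma Gfin: "finite (Gc n)" using sub[of n] by (simp add: finite_subgroup_def)

lemma dG_zsmult: "a \<in> Gc n \<Longrightarrow> dG n (zsmult k a) = zsmult k (dG n a)"
  by (rule hom_zsmult[OF sub]) (auto intro: dG_add)
lemma dG_sum: "(\<And>i. i \<in> A \<Longrightarrow> f i \<in> Gc n) \<Longrightarrow> dG n (\<Sum>i\<in>A. f i) = (\<Sum>i\<in>A. dG n (f i))"
  by (rule hom_sum[OF sub]) (auto intro: dG_add)
lemma dG_0: "dG n 0 = 0"
  using dG_zsmult[OF G0, of n 0] by simp
lemma dG_diff: "a \<in> Gc n \<Longrightarrow> b \<in> Gc n \<Longrightarrow> dG n (a - b) = dG n a - dG n b"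
  using dG_add[of "a - b" n b] Gdiff by (simp add: eq_diff_eq)

lemma C_fin: "finite (C p)"
proof -
  let ?F = "\<lambda>h x. if x \<in> X then h x else 0"
  have "C p \<subseteq> ?F ` PiE X (\<lambda>x. Gc (deg x - p))"
  proof
    fix f assume f: "f \<in> C p"
    have "f = ?F (restrict f X)" using f by (intro ext) (auto simp: cochains_def restrict_def)
    moreover have "restrict f X \<in> PiE X (\<lambda>x. Gc (deg x - p))" using f by (auto simp: cochains_def)
    ultimately show "f \<in> ?F ` PiE X (\<lambda>x. Gc (deg x - p))" by blast
  qed
  moreover have "finite (PiE X (\<lambda>x. Gc (deg x - p)))" using finX Gfin by (intro finite_PiE) auto
  ultimately show ?thesis by (rule finite_subset[OF _ finite_imageI])
qed

lemma C_0: "(\<lambda>x. 0) \<in> C p" by (simp add: cochains_def G0)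
lemma C_add: "f \<in> C p \<Longrightarrow> g \<in> C p \<Longrightarrow> (\<lambda>x. f x + g x) \<in> C p"
  by (auto simp: cochains_def Gadd)
lemma C_diff: "f \<in> C p \<Longrightarrow> g \<in> C p \<Longrightarrow> (\<lambda>x. f x - g x) \<in> C p"
  by (auto simp: cochains_def Gdiff)
lemma C_neg: "f \<in> C p \<Longrightarrow> (\<lambda>x. - f x) \<in> C p"
  by (auto simp: cochains_def Gneg)
lemma C_ne: "C p \<noteq> {}" using C_0 by blast

lemma zs_in: "f \<in> C p \<Longrightarrow> zsmult (dC x y) (f y) \<in> Gc (deg x - 1 - p)"
proof (cases "dC x y = 0")
  case True then show ?thesis by (simp add: G0)
next
  case False
  assume f: "f \<in> C p"
  then have "f y \<in> Gc (deg y - p)" using dC_nz[OF False] by (auto simp: cochains_def)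
  then show ?thesis using dC_nz[OF False] zsmult_in[OF sub] by simp
qed

lemma cob_in: assumes f: "f \<in> C p" shows "\<delta> p f \<in> C (p + 1)"
proof -
  have "\<delta> p f x \<in> Gc (deg x - (p + 1))" if x: "x \<in> X" for x
  proof -
    have s: "(\<Sum>y\<in>X. zsmult (dC x y) (f y)) \<in> Gc (deg x - 1 - p)"
      using zs_in[OF f] by (intro finite_subgroup_sum[OF sub])
    have "f x \<in> Gc (deg x - p)" using f x by (simp add: cochains_def)
    then have "dG (deg x - p) (f x) \<in> Gc (deg x - p - 1)" by (rule dG_in)
    moreover have "deg x - p - 1 = deg x - 1 - p" by simp
    ultimately have d: "dG (deg x - p) (f x) \<in> Gc (deg x - 1 - p)" by simp
    show ?thesis using s d x by (auto simp: coboundary_def Gdiff Gneg algebra_simps)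
  qed
  then show ?thesis by (auto simp: cochains_def coboundary_def)
qed

lemma cob_add: assumes f: "f \<in> C p" and g: "g \<in> C p"
  shows "\<delta> p (\<lambda>x. f x + g x) = (\<lambda>x. \<delta> p f x + \<delta> p g x)"
proof
  fix x
  show "\<delta> p (\<lambda>x. f x + g x) x = \<delta> p f x + \<delta> p g x"
  proof (cases "x \<in> X")
    case True
    have "f x \<in> Gc (deg x - p)" "g x \<in> Gc (deg x - p)" using f g True by (auto simp: cochains_def)
    then have "dG (deg x - p) (f x + g x) = dG (deg x - p) (f x) + dG (deg x - p) (g x)" by (rule dG_add)
    then show ?thesis using True
      by (simp add: coboundary_def zsmult_add_right sum.distrib algebra_simps)
  qed (simp add: coboundary_def)
qed

lemma cob_0: "\<delta> p (\<lambda>x. 0) = (\<lambda>x. 0)"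
  by (auto simp: coboundary_def dG_0 fun_eq_iff)

lemma cob_diff: assumes f: "f \<in> C p" and g: "g \<in> C p"
  shows "\<delta> p (\<lambda>x. f x - g x) = (\<lambda>x. \<delta> p f x - \<delta> p g x)"
proof -
  have "\<delta> p (\<lambda>x. (f x - g x) + g x) = (\<lambda>x. \<delta> p (\<lambda>x. f x - g x) x + \<delta> p g x)"
    by (rule cob_add[OF C_diff[OF f g] g])
  then show ?thesis by (simp add: fun_eq_iff eq_diff_eq)
qed

end



context setting begin

lemma zs_in1: "t \<in> C (-1) \<Longrightarrow> zsmult (dC x y) (t y) \<in> Gc (deg x)"
  using zs_in[of t "-1" x y] by simp

lemma cob_cob: assumes t: "t \<in> C (-1)" shows "\<delta> 0 (\<delta> (-1) t) = (\<lambda>x. 0)"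
proof (rule ext)
  fix x
  show "\<delta> 0 (\<delta> (-1) t) x = 0"
  proof (cases "x \<in> X")
    case False then show ?thesis by (simp add: coboundary_def)
  next
    case True
    let ?s = "\<delta> (-1) t"
    have s_val: "?s y = (\<Sum>z\<in>X. zsmult (dC y z) (t z)) + dG (deg y + 1) (t y)" if "y \<in> X" for y
      unfolding coboundary_def using that by simp
    have tin: "t y \<in> Gc (deg y + 1)" if "y \<in> X" for y using t that by (simp add: cochains_def)
    have termA: "zsmult (dC x y) (?s y) = (\<Sum>z\<in>X. zsmult (dC x y * dC y z) (t z))
        + zsmult (dC x y) (dG (deg x) (t y))" if y: "y \<in> X" for y
    proof (cases "dC x y = 0")
      case True then show ?thesis by simp
    next
      case False
      then have "deg y + 1 = deg x" using dC_nz by force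
      then show ?thesis using y
        by (simp add: s_val zsmult_add_right zsmult_sum_right zsmult_mult)
    qed
    have A: "(\<Sum>y\<in>X. zsmult (dC x y) (?s y)) = (\<Sum>y\<in>X. \<Sum>z\<in>X. zsmult (dC x y * dC y z) (t z))
        + (\<Sum>y\<in>X. zsmult (dC x y) (dG (deg x) (t y)))"
      using termA by (simp add: sum.distrib)
    have "(\<Sum>y\<in>X. \<Sum>z\<in>X. zsmult (dC x y * dC y z) (t z)) = (\<Sum>z\<in>X. \<Sum>y\<in>X. zsmult (dC x y * dC y z) (t z))"
      by (rule sum.swap)
    also have "\<dots> = (\<Sum>z\<in>X. zsmult (\<Sum>y\<in>X. dC x y * dC y z) (t z))"
      by (simp add: zsmult_sum_left)
    also have "\<dots> = 0" by (simp add: dCdC)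
    finally have A1: "(\<Sum>y\<in>X. \<Sum>z\<in>X. zsmult (dC x y * dC y z) (t z)) = 0" .
    have sum_in: "(\<Sum>z\<in>X. zsmult (dC x z) (t z)) \<in> Gc (deg x)"
      using zs_in1[OF t] by (intro finite_subgroup_sum[OF sub])
    have dd_in: "dG (deg x + 1) (t x) \<in> Gc (deg x)" using dG_in[OF tin[OF True]] by simp
    have "dG (deg x) (?s x) = dG (deg x) (\<Sum>z\<in>X. zsmult (dC x z) (t z)) + dG (deg x) (dG (deg x + 1) (t x))"
      using s_val[OF True] dG_add[OF sum_in dd_in] by simp
    also have "dG (deg x) (dG (deg x + 1) (t x)) = 0" using dGdG[OF tin[OF True]] by simp
    also have "dG (deg x) (\<Sum>z\<in>X. zsmult (dC x z) (t z)) = (\<Sum>z\<in>X. dG (deg x) (zsmult (dC x z) (t z)))"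
      using zs_in1[OF t] by (intro dG_sum)
    also have "\<dots> = (\<Sum>z\<in>X. zsmult (dC x z) (dG (deg x) (t z)))"
    proof (rule sum.cong)
      fix z assume z: "z \<in> X"
      show "dG (deg x) (zsmult (dC x z) (t z)) = zsmult (dC x z) (dG (deg x) (t z))"
      proof (cases "dC x z = 0")
        case True then show ?thesis by (simp add: dG_0)
      next
        case False
        then have "deg z + 1 = deg x" using dC_nz by force
        then have "t z \<in> Gc (deg x)" using tin[OF z] by simp
        then show ?thesis by (rule dG_zsmult)
      qed
    qed simp
    finally have B: "dG (deg x) (?s x) = (\<Sum>z\<in>X. zsmult (dC x z) (dG (deg x) (t z)))" by simp
    show ?thesis using True A A1 B by (simp add: coboundary_def[of X deg dC dG 0])
  qed
qed

end



context setting begin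

abbreviation "Bs \<equiv> coboundaries0 X deg dC Gc dG"
abbreviation "Zs \<equiv> cocycles0 X deg dC Gc dG"
abbreviation "Av f \<equiv> A_total X deg dC Gc dG (ket f)"
definition "Kc = card {t \<in> C (-1). \<delta> (-1) t = (\<lambda>x. 0)}"
definition "Nc = card (C (-1))"
definition "c0 = (of_nat Kc / of_nat Nc :: complex)"

lemma B_def': "Bs = \<delta> (-1) ` C (-1)" by (simp add: coboundaries0_def)

lemma B_0: "(\<lambda>x. 0) \<in> Bs"
  unfolding B_def' using C_0 cob_0 by (metis image_eqI)

lemma B_add: assumes "a \<in> Bs" "b \<in> Bs" shows "(\<lambda>x. a x + b x) \<in> Bs"
proof -
  obtain s t where st: "s \<in> C (-1)" "t \<in> C (-1)" "a = \<delta> (-1) s" "b = \<delta> (-1) t"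
    using assms unfolding B_def' by blast
  have "(\<lambda>x. a x + b x) = \<delta> (-1) (\<lambda>x. s x + t x)" using cob_add[OF st(1,2)] st(3,4) by simp
  moreover have "(\<lambda>x. s x + t x) \<in> C (-1)" using C_add[OF st(1,2)] .
  ultimately show ?thesis unfolding B_def' by (rule image_eqI)
qed

lemma B_diff: assumes "a \<in> Bs" "b \<in> Bs" shows "(\<lambda>x. a x - b x) \<in> Bs"
proof -
  obtain s t where st: "s \<in> C (-1)" "t \<in> C (-1)" "a = \<delta> (-1) s" "b = \<delta> (-1) t"
    using assms unfolding B_def' by blast
  have "(\<lambda>x. a x - b x) = \<delta> (-1) (\<lambda>x. s x - t x)" using cob_diff[OF st(1,2)] st(3,4) by simp
  moreover have "(\<lambda>x. s x - t x) \<in> C (-1)" using C_diff[OF st(1,2)] .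
  ultimately show ?thesis unfolding B_def' by (rule image_eqI)
qed

lemma B_C0: "b \<in> Bs \<Longrightarrow> b \<in> C 0"
  unfolding B_def' using cob_in[of _ "-1"] by auto

lemma B_cocycle: "b \<in> Bs \<Longrightarrow> \<delta> 0 b = (\<lambda>x. 0)"
  unfolding B_def' using cob_cob by auto

lemma Kc_pos: "Kc > 0"
proof -
  have "(\<lambda>x. 0) \<in> {t \<in> C (-1). \<delta> (-1) t = (\<lambda>x. 0)}"
    unfolding mem_Collect_eq using C_0[of "-1"] cob_0[of "-1"] by (rule conjI)
  moreover have "finite {t \<in> C (-1). \<delta> (-1) t = (\<lambda>x. 0)}"
    using C_fin[of "-1"] by (rule rev_finite_subset) blast
  ultimately show ?thesis unfolding Kc_def card_gt_0_iff by blast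
qed

lemma Nc_pos: "Nc > 0"
  unfolding Nc_def card_gt_0_iff using C_fin C_ne by blast

lemma c0_nz: "c0 \<noteq> 0"
proof -
  have "of_nat Kc \<noteq> (0::complex)" "of_nat Nc \<noteq> (0::complex)" using Kc_pos Nc_pos by auto
  then show ?thesis unfolding c0_def by simp
qed

lemma cnt: "card {t \<in> C (-1). \<delta> (-1) t = d} = (if d \<in> Bs then Kc else 0)"
proof (cases "d \<in> Bs")
  case False
  then have "{t \<in> C (-1). \<delta> (-1) t = d} = {}" unfolding B_def' by auto
  then show ?thesis using False by (metis card.empty)
next
  case True
  then obtain t0 where t0: "t0 \<in> C (-1)" "d = \<delta> (-1) t0" unfolding B_def' by auto
  let ?K = "{t \<in> C (-1). \<delta> (-1) t = (\<lambda>x. 0)}"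
  let ?h = "\<lambda>u. \<lambda>x. u x + t0 x"
  have eq: "{t \<in> C (-1). \<delta> (-1) t = d} = ?h ` ?K"
  proof
    show "?h ` ?K \<subseteq> {t \<in> C (-1). \<delta> (-1) t = d}"
      using t0 C_add cob_add by auto
  next
    show "{t \<in> C (-1). \<delta> (-1) t = d} \<subseteq> ?h ` ?K"
    proof
      fix t assume t: "t \<in> {t \<in> C (-1). \<delta> (-1) t = d}"
      then have m: "(\<lambda>x. t x - t0 x) \<in> ?K" using t0 C_diff cob_diff by auto
      have e: "t = ?h (\<lambda>x. t x - t0 x)" by simp
      show "t \<in> ?h ` ?K" by (rule image_eqI[where f = "\<lambda>u x. u x + t0 x", OF e m])
    qed
  qed
  have "inj_on ?h ?K" by (auto simp: inj_on_def fun_eq_iff)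
  then show ?thesis using True eq by (simp add: card_image Kc_def)
qed

lemma Av_val: "Av f g = (if (\<lambda>x. g x - f x) \<in> Bs then c0 else 0)"
proof -
  have a: "Aop X deg dC dG t (ket f) g = (if (\<lambda>x. g x - \<delta> (-1) t x) = f then 1 else 0)" for t
    by (simp only: Aop_def Pop_def ket_def)
  have "Av f g = 1 / of_nat Nc * (\<Sum>t\<in>C (-1). Aop X deg dC dG t (ket f) g)"
    by (simp only: A_total_def cscale_def sum_fun_apply Nc_def)
  also have "\<dots> = 1 / of_nat Nc * (\<Sum>t\<in>C (-1). if (\<lambda>x. g x - \<delta> (-1) t x) = f then 1 else 0)"
    by (simp only: a)
  also have "(\<Sum>t\<in>C (-1). if (\<lambda>x. g x - \<delta> (-1) t x) = f then 1 else 0)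
      = (\<Sum>t\<in>C (-1). if \<delta> (-1) t = (\<lambda>x. g x - f x) then (1::complex) else 0)"
    by (intro sum.cong refl) (auto simp: fun_eq_iff algebra_simps)
  also have "\<dots> = of_nat (card {t \<in> C (-1). \<delta> (-1) t = (\<lambda>x. g x - f x)})"
    using C_fin by (rule sum_indicator_card)
  finally show ?thesis by (simp add: cnt c0_def)
qed

lemma Av_eq_iff: "Av f = Av g \<longleftrightarrow> (\<lambda>x. f x - g x) \<in> Bs"
proof
  assume e: "Av f = Av g"
  have "Av f f = c0" using B_0 by (simp add: Av_val)
  then have "Av g f \<noteq> 0" using e c0_nz by simp
  then show "(\<lambda>x. f x - g x) \<in> Bs" by (simp add: Av_val split: if_splits)
next
  assume fg: "(\<lambda>x. f x - g x) \<in> Bs"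
  have iff: "(\<lambda>x. h x - f x) \<in> Bs \<longleftrightarrow> (\<lambda>x. h x - g x) \<in> Bs" for h
  proof
    assume "(\<lambda>x. h x - f x) \<in> Bs"
    from B_add[OF this fg] show "(\<lambda>x. h x - g x) \<in> Bs" by simp
  next
    assume "(\<lambda>x. h x - g x) \<in> Bs"
    from B_diff[OF this fg] show "(\<lambda>x. h x - f x) \<in> Bs" by simp
  qed
  show "Av f = Av g"
  proof (rule ext)
    fix h show "Av f h = Av g h" unfolding Av_val using iff[of h] by (simp only:)
  qed
qed

end



lemma avg_unit_one:
  assumes fin: "finite R" and n: "\<And>r. r \<in> R \<Longrightarrow> cmod (z r) = 1"
    and avg: "(\<Sum>r\<in>R. z r) = of_nat (card R)"
    and r: "r \<in> R"
  shows "z r = 1"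
proof -
  have re: "(\<Sum>r\<in>R. Re (z r)) = real (card R)"
  proof -
    have "Re (\<Sum>r\<in>R. z r) = Re (of_nat (card R))" using avg by (rule arg_cong)
    then show ?thesis by (simp add: Re_sum)
  qed
  have le: "0 \<le> 1 - Re (z r)" if "r \<in> R" for r
    using complex_Re_le_cmod[of "z r"] n[OF that] by simp
  have s0: "(\<Sum>r\<in>R. 1 - Re (z r)) = 0"
    by (simp only: sum_subtractf re) simp
  have "\<forall>r\<in>R. 1 - Re (z r) = 0" using sum_nonneg_eq_0_iff[OF fin, of "\<lambda>r. 1 - Re (z r)"] le s0
    by blast
  then have reo: "Re (z r) = 1" using r by auto
  have "cmod (z r) = 1" using n[OF r] .
  then have "sqrt ((Re (z r))\<^sup>2 + (Im (z r))\<^sup>2) = 1" by (simp only: cmod_def)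
  then have "(Re (z r))\<^sup>2 + (Im (z r))\<^sup>2 = 1" by (metis real_sqrt_eq_1_iff)
  then have "Im (z r) = 0" using reo by simp
  then show "z r = 1" using reo by (simp add: complex_eq_iff)
qed


context setting begin

definition "Gs = {\<Psi> \<in> Hspace (C 0). (\<forall>f. \<Psi> f \<noteq> 0 \<longrightarrow> \<delta> 0 f = (\<lambda>x. 0))
   \<and> (\<forall>f t. t \<in> C (-1) \<longrightarrow> \<Psi> (\<lambda>x. f x - \<delta> (-1) t x) = \<Psi> f)}"

lemma Avert_val: "A_vertex X deg dC Gc dG x \<Psi> f = 1 / of_nat (card (Gc (deg x + 1)))
   * (\<Sum>h\<in>Gc (deg x + 1). \<Psi> (\<lambda>y. f y - \<delta> (-1) (loc_cochain x h) y))"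
  by (simp only: A_vertex_def cscale_def sum_fun_apply Aop_def Pop_def)

lemma Bvert_val: "B_vertex X deg dC Gc dG x \<Psi> f = 1 / of_nat (card (characters (Gc (deg x - 1))))
   * (\<Sum>r\<in>characters (Gc (deg x - 1)). r (\<delta> 0 f x) * \<Psi> f)"
  by (simp only: B_vertex_def cscale_def sum_fun_apply Bop_def Qop_def)

lemma loc_in: "x \<in> X \<Longrightarrow> h \<in> Gc (deg x + 1) \<Longrightarrow> loc_cochain x h \<in> C (-1)"
  by (auto simp: cochains_def loc_cochain_def G0)

lemma loc_add: "loc_cochain x (a + b) = (\<lambda>y. loc_cochain x a y + loc_cochain x (b::'g) y)"
  by (simp add: loc_cochain_def fun_eq_iff)

lemma card_G_pos: "card (Gc n) > 0"
  using Gfin G0 by (auto simp: card_gt_0_iff)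

lemma card_ch_pos: "card (characters (Gc n)) > 0"
  using characters_finite[OF sub] characters_const1 by (auto simp: card_gt_0_iff)

lemma cob1_val: "f \<in> C 0 \<Longrightarrow> x \<in> X \<Longrightarrow> \<delta> 0 f x \<in> Gc (deg x - 1)"
  using cob_in[of f 0] by (simp add: cochains_def)

lemma ground_sub_Gs: assumes P: "\<Psi> \<in> ground_space X deg dC Gc dG" shows "\<Psi> \<in> Gs"
proof -
  have H: "\<Psi> \<in> Hspace (C 0)" and Av: "\<And>x. x \<in> X \<Longrightarrow> A_vertex X deg dC Gc dG x \<Psi> = \<Psi>"
    and Bv: "\<And>x. x \<in> X \<Longrightarrow> B_vertex X deg dC Gc dG x \<Psi> = \<Psi>"
    using P by (auto simp: ground_space_def)
  have supp: "\<delta> 0 f = (\<lambda>x. 0)" if nz: "\<Psi> f \<noteq> 0" for f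
  proof (rule ext)
    fix x
    have f: "f \<in> C 0" using H nz by (auto simp: Hspace_def)
    show "\<delta> 0 f x = 0"
    proof (cases "x \<in> X")
      case False then show ?thesis by (simp add: coboundary_def)
    next
      case True
      let ?a = "\<delta> 0 f x"
      let ?R = "characters (Gc (deg x - 1))"
      have a: "?a \<in> Gc (deg x - 1)" using cob1_val[OF f True] .
      have "B_vertex X deg dC Gc dG x \<Psi> f = \<Psi> f" using Bv[OF True] by simp
      then have "1 / of_nat (card ?R) * ((\<Sum>r\<in>?R. r ?a) * \<Psi> f) = 1 * \<Psi> f"
        by (simp only: Bvert_val sum_distrib_right) simp
      then have "1 / of_nat (card ?R) * (\<Sum>r\<in>?R. r ?a) = 1" using nz
        by (metis mult.assoc mult_cancel_right)
      then have s: "(\<Sum>r\<in>?R. r ?a) = of_nat (card ?R)" using card_ch_pos[of "deg x - 1"]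
        by (simp add: field_simps)
      have all1: "r ?a = 1" if "r \<in> ?R" for r
        using avg_unit_one[OF characters_finite[OF sub] _ s that] a
        by (auto simp: characters_def)
      show ?thesis
      proof (rule ccontr)
        assume "?a \<noteq> 0"
        then obtain r where "r \<in> ?R" "r ?a \<noteq> 1" using char_separate[OF sub a] by blast
        then show False using all1 by blast
      qed
    qed
  qed
  have loc_inv: "\<Psi> (\<lambda>y. f y - \<delta> (-1) (loc_cochain x h0) y) = \<Psi> f"
    if x: "x \<in> X" and h0: "h0 \<in> Gc (deg x + 1)" for x h0 f
  proof -
    let ?G = "Gc (deg x + 1)"
    let ?f' = "\<lambda>y. f y - \<delta> (-1) (loc_cochain x h0) y"
    have e: "(\<lambda>y. ?f' y - \<delta> (-1) (loc_cochain x h) y) = (\<lambda>y. f y - \<delta> (-1) (loc_cochain x (h0 + h)) y)"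
      if h: "h \<in> ?G" for h
    proof -
      have "\<delta> (-1) (loc_cochain x (h0 + h)) = (\<lambda>y. \<delta> (-1) (loc_cochain x h0) y + \<delta> (-1) (loc_cochain x h) y)"
        unfolding loc_add by (rule cob_add[OF loc_in[OF x h0] loc_in[OF x h]])
      then show ?thesis by (simp add: fun_eq_iff algebra_simps)
    qed
    have bij: "bij_betw (\<lambda>h. h0 + h) ?G ?G"
    proof (rule bij_betw_byWitness[where f' = "\<lambda>h. h - h0"])
    qed (auto simp: Gadd Gdiff h0)
    have "\<Psi> ?f' = A_vertex X deg dC Gc dG x \<Psi> ?f'" using Av[OF x] by simp
    also have "\<dots> = 1 / of_nat (card ?G) * (\<Sum>h\<in>?G. \<Psi> (\<lambda>y. f y - \<delta> (-1) (loc_cochain x (h0 + h)) y))"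
      unfolding Avert_val using e by (intro arg_cong[where f = "\<lambda>s. 1 / of_nat (card ?G) * s"] sum.cong) auto
    also have "(\<Sum>h\<in>?G. \<Psi> (\<lambda>y. f y - \<delta> (-1) (loc_cochain x (h0 + h)) y))
        = (\<Sum>h\<in>?G. \<Psi> (\<lambda>y. f y - \<delta> (-1) (loc_cochain x h) y))"
      by (rule sum.reindex_bij_betw[OF bij])
    also have "1 / of_nat (card ?G) * \<dots> = A_vertex X deg dC Gc dG x \<Psi> f" unfolding Avert_val ..
    also have "\<dots> = \<Psi> f" using Av[OF x] by simp
    finally show ?thesis .
  qed
  have inv_F: "F \<subseteq> X \<Longrightarrow> (\<Sum>x\<in>F. loc_cochain x (t x)) \<in> C (-1) \<and>
      (\<forall>f. \<Psi> (\<lambda>y. f y - \<delta> (-1) (\<Sum>x\<in>F. loc_cochain x (t x)) y) = \<Psi> f)"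
    if t: "t \<in> C (-1)" for F t
  proof (induct F rule: infinite_finite_induct)
    case (infinite A)
    then show ?case using finX rev_finite_subset by blast
  next
    case empty
    show ?case using C_0 cob_0 by (simp add: zero_fun_def)
  next
    case (insert x F)
    let ?S = "\<Sum>x\<in>F. loc_cochain x (t x)"
    have IH: "?S \<in> C (-1)" "\<And>f. \<Psi> (\<lambda>y. f y - \<delta> (-1) ?S y) = \<Psi> f" using insert by auto
    have x: "x \<in> X" using insert by auto
    have tx: "t x \<in> Gc (deg x + 1)" using t x by (simp add: cochains_def)
    have lx: "loc_cochain x (t x) \<in> C (-1)" by (rule loc_in[OF x tx])
    have sum_eq: "(\<Sum>x\<in>insert x F. loc_cochain x (t x)) = (\<lambda>y. loc_cochain x (t x) y + ?S y)"
      using insert(1,2) by (simp add: plus_fun_def)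
    have "(\<lambda>y. loc_cochain x (t x) y + ?S y) \<in> C (-1)" by (rule C_add[OF lx IH(1)])
    moreover have "\<Psi> (\<lambda>y. f y - \<delta> (-1) (\<lambda>y. loc_cochain x (t x) y + ?S y) y) = \<Psi> f" for f
    proof -
      have "(\<lambda>y. f y - \<delta> (-1) (\<lambda>y. loc_cochain x (t x) y + ?S y) y)
          = (\<lambda>y. (f y - \<delta> (-1) ?S y) - \<delta> (-1) (loc_cochain x (t x)) y)"
        using cob_add[OF lx IH(1)] by (simp add: fun_eq_iff algebra_simps)
      then show ?thesis using loc_inv[OF x tx, of "\<lambda>y. f y - \<delta> (-1) ?S y"] IH(2) by simp
    qed
    ultimately show ?case unfolding sum_eq by blast
  qed
  have tsum: "(\<Sum>x\<in>X. loc_cochain x (t x)) = t" if t: "t \<in> C (-1)" for t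
  proof (rule ext)
    fix y
    have "(\<Sum>x\<in>X. loc_cochain x (t x)) y = (\<Sum>x\<in>X. if y = x then t x else 0)"
      by (simp add: sum_fun_apply loc_cochain_def)
    also have "\<dots> = t y" using finX t by (auto simp: cochains_def)
    finally show "(\<Sum>x\<in>X. loc_cochain x (t x)) y = t y" .
  qed
  have inv: "\<Psi> (\<lambda>y. f y - \<delta> (-1) t y) = \<Psi> f" if t: "t \<in> C (-1)" for f t
    using inv_F[OF t, of X] tsum[OF t] by simp
  show ?thesis unfolding Gs_def using H supp inv by blast
qed

lemma Gs_sub_ground: assumes P: "\<Psi> \<in> Gs" shows "\<Psi> \<in> ground_space X deg dC Gc dG"
proof -
  have H: "\<Psi> \<in> Hspace (C 0)" and supp: "\<And>f. \<Psi> f \<noteq> 0 \<Longrightarrow> \<delta> 0 f = (\<lambda>x. 0)"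
    and inv: "\<And>f t. t \<in> C (-1) \<Longrightarrow> \<Psi> (\<lambda>x. f x - \<delta> (-1) t x) = \<Psi> f"
    using P by (auto simp: Gs_def)
  have A: "A_vertex X deg dC Gc dG x \<Psi> = \<Psi>" if x: "x \<in> X" for x
  proof (rule ext)
    fix f
    let ?G = "Gc (deg x + 1)"
    have "(\<Sum>h\<in>?G. \<Psi> (\<lambda>y. f y - \<delta> (-1) (loc_cochain x h) y)) = (\<Sum>h\<in>?G. \<Psi> f)"
      using inv loc_in[OF x] by (intro sum.cong) auto
    also have "\<dots> = of_nat (card ?G) * \<Psi> f" by simp
    finally show "A_vertex X deg dC Gc dG x \<Psi> f = \<Psi> f"
      unfolding Avert_val using card_G_pos[of "deg x + 1"] by simp
  qed
  have B: "B_vertex X deg dC Gc dG x \<Psi> = \<Psi>" if x: "x \<in> X" for x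
  proof (rule ext)
    fix f
    let ?R = "characters (Gc (deg x - 1))"
    show "B_vertex X deg dC Gc dG x \<Psi> f = \<Psi> f"
    proof (cases "\<Psi> f = 0")
      case True then show ?thesis unfolding Bvert_val by simp
    next
      case False
      then have d: "\<delta> 0 f x = 0" using supp by simp
      have "(\<Sum>r\<in>?R. r (\<delta> 0 f x) * \<Psi> f) = (\<Sum>r\<in>?R. \<Psi> f)"
        unfolding d using char_one[OF sub] by (intro sum.cong) auto
      also have "\<dots> = of_nat (card ?R) * \<Psi> f" by simp
      finally show ?thesis unfolding Bvert_val using card_ch_pos[of "deg x - 1"] by simp
    qed
  qed
  show ?thesis unfolding ground_space_def using H A B by blast
qed

lemma ground_eq: "ground_space X deg dC Gc dG = Gs"
  using ground_sub_Gs Gs_sub_ground by blast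

end



context setting begin

lemma Z_C0: "f \<in> Zs \<Longrightarrow> f \<in> C 0" by (simp add: cocycles0_def)
lemma Z_cob: "f \<in> Zs \<Longrightarrow> \<delta> 0 f = (\<lambda>x. 0)" by (simp add: cocycles0_def)

lemma Av_in_Gs: assumes f: "f \<in> Zs" shows "Av f \<in> Gs"
proof -
  have H: "Av f \<in> Hspace (C 0)"
    unfolding Hspace_def mem_Collect_eq
  proof (intro allI impI)
    fix g assume g: "g \<notin> C 0"
    show "Av f g = 0"
    proof (rule ccontr)
      assume "Av f g \<noteq> 0"
      then have b: "(\<lambda>x. g x - f x) \<in> Bs" by (simp add: Av_val split: if_splits)
      have "(\<lambda>x. f x + (g x - f x)) \<in> C 0" by (rule C_add[OF Z_C0[OF f] B_C0[OF b]])
      then show False using g by simp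
    qed
  qed
  have S: "\<delta> 0 g = (\<lambda>x. 0)" if "Av f g \<noteq> 0" for g
  proof -
    have b: "(\<lambda>x. g x - f x) \<in> Bs" using that by (simp add: Av_val split: if_splits)
    have "\<delta> 0 (\<lambda>x. f x + (g x - f x)) = (\<lambda>x. \<delta> 0 f x + \<delta> 0 (\<lambda>x. g x - f x) x)"
      by (rule cob_add[OF Z_C0[OF f] B_C0[OF b]])
    then show ?thesis using Z_cob[OF f] B_cocycle[OF b] by simp
  qed
  have I: "Av f (\<lambda>x. g x - \<delta> (-1) t x) = Av f g" if t: "t \<in> C (-1)" for g t
  proof -
    have dt: "\<delta> (-1) t \<in> Bs" using t by (simp add: B_def')
    have "(\<lambda>x. (g x - \<delta> (-1) t x) - f x) \<in> Bs \<longleftrightarrow> (\<lambda>x. g x - f x) \<in> Bs"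
    proof
      assume "(\<lambda>x. (g x - \<delta> (-1) t x) - f x) \<in> Bs"
      from B_add[OF this dt] show "(\<lambda>x. g x - f x) \<in> Bs" by simp
    next
      assume "(\<lambda>x. g x - f x) \<in> Bs"
      from B_diff[OF this dt] show "(\<lambda>x. (g x - \<delta> (-1) t x) - f x) \<in> Bs" by (simp add: algebra_simps)
    qed
    then show ?thesis unfolding Av_val by (simp only:)
  qed
  show ?thesis unfolding Gs_def using H S I by blast
qed

lemma Gs_subspace: "cs.subspace Gs"
proof (rule cs.subspaceI)
  show "0 \<in> Gs" by (simp add: Gs_def Hspace_def zero_fun_def)
next
  fix \<Psi> \<Phi> assume a: "\<Psi> \<in> Gs" "\<Phi> \<in> Gs"
  show "\<Psi> + \<Phi> \<in> Gs" unfolding Gs_def mem_Collect_eq plus_fun_def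
  proof (intro conjI allI impI)
    show "(\<lambda>x. \<Psi> x + \<Phi> x) \<in> Hspace (C 0)" using a by (auto simp: Gs_def Hspace_def)
  next
    fix f assume "\<Psi> f + \<Phi> f \<noteq> 0"
    then have "\<Psi> f \<noteq> 0 \<or> \<Phi> f \<noteq> 0" by auto
    then show "\<delta> 0 f = (\<lambda>x. 0)" using a by (auto simp: Gs_def)
  next
    fix f t assume "t \<in> C (-1)"
    then show "\<Psi> (\<lambda>x. f x - \<delta> (-1) t x) + \<Phi> (\<lambda>x. f x - \<delta> (-1) t x) = \<Psi> f + \<Phi> f"
      using a by (simp add: Gs_def)
  qed
next
  fix c \<Psi> assume "\<Psi> \<in> Gs"
  then show "cscale c \<Psi> \<in> Gs" by (auto simp: Gs_def Hspace_def cscale_def)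
qed

lemma Z_fin: "finite Zs" using C_fin[of 0] by (rule rev_finite_subset) (auto simp: cocycles0_def)
lemma B_fin: "finite Bs" unfolding B_def' using C_fin by simp
lemma B_card_pos: "card Bs > 0" using B_fin B_0 by (auto simp: card_gt_0_iff)

lemma Gs_sub_span: assumes P: "\<Psi> \<in> Gs" shows "\<Psi> \<in> cs.span (Av ` Zs)"
proof -
  have H: "\<Psi> \<in> Hspace (C 0)" and supp: "\<And>f. \<Psi> f \<noteq> 0 \<Longrightarrow> \<delta> 0 f = (\<lambda>x. 0)"
    and inv: "\<And>f t. t \<in> C (-1) \<Longrightarrow> \<Psi> (\<lambda>x. f x - \<delta> (-1) t x) = \<Psi> f"
    using P by (auto simp: Gs_def)
  let ?k = "c0 * of_nat (card Bs)"
  have key: "(\<Sum>f\<in>Zs. cscale (\<Psi> f) (Av f)) = cscale ?k \<Psi>"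
  proof (rule ext)
    fix g
    let ?T = "{f \<in> Zs. (\<lambda>x. g x - f x) \<in> Bs}"
    have trm: "\<Psi> f * Av f g = (if f \<in> ?T then \<Psi> g * c0 else 0)" if f: "f \<in> Zs" for f
    proof (cases "(\<lambda>x. g x - f x) \<in> Bs")
      case True
      then obtain t where t: "t \<in> C (-1)" "(\<lambda>x. g x - f x) = \<delta> (-1) t" unfolding B_def' by auto
      have "f = (\<lambda>x. g x - \<delta> (-1) t x)" using t(2) by (simp add: fun_eq_iff algebra_simps)
      then have "\<Psi> f = \<Psi> g" using inv[OF t(1)] by simp
      then show ?thesis using True f by (simp add: Av_val)
    next
      case False then show ?thesis by (simp add: Av_val)
    qed
    have "(\<Sum>f\<in>Zs. cscale (\<Psi> f) (Av f)) g = (\<Sum>f\<in>Zs. \<Psi> f * Av f g)"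
      by (simp add: sum_fun_apply cscale_def)
    also have "\<dots> = (\<Sum>f\<in>Zs. if f \<in> ?T then \<Psi> g * c0 else 0)"
      using trm by (rule sum.cong[OF refl])
    also have "\<dots> = (\<Sum>f\<in>?T. \<Psi> g * c0)"
      using Z_fin by (simp add: sum.inter_filter[symmetric])
    also have "\<dots> = \<Psi> g * c0 * of_nat (card ?T)" by simp
    also have "\<dots> = \<Psi> g * c0 * of_nat (card Bs)"
    proof (cases "\<Psi> g = 0")
      case True then show ?thesis by simp
    next
      case False
      have gZ: "g \<in> Zs" using H False supp by (auto simp: Hspace_def cocycles0_def)
      let ?m = "\<lambda>b. \<lambda>x. g x - b x"
      have "?T = ?m ` Bs"
      proof
        show "?T \<subseteq> ?m ` Bs"
        proof
          fix f assume "f \<in> ?T"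
          then have "(\<lambda>x. g x - f x) \<in> Bs" by simp
          moreover have "f = ?m (\<lambda>x. g x - f x)" by simp
          ultimately show "f \<in> ?m ` Bs" by (rule rev_image_eqI[where f = "\<lambda>b. \<lambda>x. g x - b x"])
        qed
      next
        show "?m ` Bs \<subseteq> ?T"
        proof
          fix f assume "f \<in> ?m ` Bs"
          then obtain b where b: "b \<in> Bs" "f = ?m b" by auto
          have "?m b \<in> C 0" by (rule C_diff[OF Z_C0[OF gZ] B_C0[OF b(1)]])
          moreover have "\<delta> 0 (?m b) = (\<lambda>x. 0)"
            using cob_diff[OF Z_C0[OF gZ] B_C0[OF b(1)]] Z_cob[OF gZ] B_cocycle[OF b(1)] by simp
          moreover have "(\<lambda>x. g x - ?m b x) = b" by simp
          ultimately show "f \<in> ?T" using b by (simp add: cocycles0_def)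
        qed
      qed
      moreover have "inj_on ?m Bs" by (auto simp: inj_on_def fun_eq_iff)
      ultimately have "card ?T = card Bs" by (simp add: card_image)
      then show ?thesis by simp
    qed
    also have "\<dots> = cscale ?k \<Psi> g" by (simp add: cscale_def)
    finally show "(\<Sum>f\<in>Zs. cscale (\<Psi> f) (Av f)) g = cscale ?k \<Psi> g" .
  qed
  have k0: "?k \<noteq> 0" using c0_nz B_card_pos by simp
  have "(\<Sum>f\<in>Zs. cscale (\<Psi> f) (Av f)) \<in> cs.span (Av ` Zs)"
    by (intro cs.span_sum cs.span_scale cs.span_base) auto
  then have "cscale (1 / ?k) (cscale ?k \<Psi>) \<in> cs.span (Av ` Zs)" unfolding key by (rule cs.span_scale)
  then show ?thesis using k0 by simp
qed

lemma span_eq: "cs.span (Av ` Zs) = ground_space X deg dC Gc dG"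
proof
  show "cs.span (Av ` Zs) \<subseteq> ground_space X deg dC Gc dG"
    unfolding ground_eq by (rule cs.span_minimal[OF _ Gs_subspace]) (auto intro: Av_in_Gs)
next
  show "ground_space X deg dC Gc dG \<subseteq> cs.span (Av ` Zs)"
    unfolding ground_eq using Gs_sub_span by blast
qed

lemma indep: "\<not> cs.dependent (Av ` Zs)"
proof
  assume "cs.dependent (Av ` Zs)"
  then obtain T u v0 where T: "finite T" "T \<subseteq> Av ` Zs" "(\<Sum>v\<in>T. cscale (u v) v) = 0"
    "v0 \<in> T" "u v0 \<noteq> 0"
    unfolding cs.dependent_explicit by blast
  obtain f0 where f0: "f0 \<in> Zs" "v0 = Av f0" using T by blast
  have val: "v f0 = (if v = v0 then c0 else 0)" if v: "v \<in> T" for v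
  proof -
    obtain f where f: "f \<in> Zs" "v = Av f" using v T by blast
    have "v f0 = (if (\<lambda>x. f0 x - f x) \<in> Bs then c0 else 0)" using f by (simp add: Av_val)
    also have "(\<lambda>x. f0 x - f x) \<in> Bs \<longleftrightarrow> v = v0" using Av_eq_iff[of f0 f] f f0 by auto
    finally show ?thesis by simp
  qed
  have "0 = (\<Sum>v\<in>T. cscale (u v) v) f0" using T(3) by simp
  also have "\<dots> = (\<Sum>v\<in>T. u v * v f0)" by (simp add: sum_fun_apply cscale_def)
  also have "\<dots> = (\<Sum>v\<in>T. if v = v0 then u v0 * c0 else 0)"
  proof (rule sum.cong[OF refl])
    fix v assume "v \<in> T"
    then show "u v * v f0 = (if v = v0 then u v0 * c0 else 0)" using val[of v] by simp
  qed
  also have "\<dots> = u v0 * c0" using T by simp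
  finally show False using T(5) c0_nz by simp
qed

lemma coset_img: "Av ` ((\<lambda>t. \<lambda>x. f x + t x) ` Bs) = {Av f}"
proof
  show "Av ` ((\<lambda>t. \<lambda>x. f x + t x) ` Bs) \<subseteq> {Av f}"
  proof
    fix v assume "v \<in> Av ` ((\<lambda>t. \<lambda>x. f x + t x) ` Bs)"
    then obtain t where t: "t \<in> Bs" "v = Av (\<lambda>x. f x + t x)" by auto
    have "(\<lambda>x. (f x + t x) - f x) \<in> Bs" using t(1) by simp
    then show "v \<in> {Av f}" using t(2) Av_eq_iff by simp
  qed
next
  have "(\<lambda>x. f x + (\<lambda>x. 0) x) \<in> (\<lambda>t. \<lambda>x. f x + t x) ` Bs" using B_0 by (rule imageI)
  then have "Av (\<lambda>x. f x + (\<lambda>x. 0) x) \<in> Av ` ((\<lambda>t. \<lambda>x. f x + t x) ` Bs)" by (rule imageI)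
  then show "{Av f} \<subseteq> Av ` ((\<lambda>t. \<lambda>x. f x + t x) ` Bs)" by simp
qed

lemma coset_sub: assumes "(\<lambda>x. f x - g x) \<in> Bs"
  shows "(\<lambda>t. \<lambda>x. f x + t x) ` Bs \<subseteq> (\<lambda>t. \<lambda>x. g x + t x) ` Bs"
proof
  fix y assume "y \<in> (\<lambda>t. \<lambda>x. f x + t x) ` Bs"
  then obtain t where t: "t \<in> Bs" "y = (\<lambda>x. f x + t x)" by auto
  have "(\<lambda>x. (f x - g x) + t x) \<in> Bs" by (rule B_add[OF assms t(1)])
  moreover have "y = (\<lambda>x. g x + ((f x - g x) + t x))" using t(2) by (simp add: algebra_simps)
  ultimately show "y \<in> (\<lambda>t. \<lambda>x. g x + t x) ` Bs" by (rule rev_image_eqI[where f = "\<lambda>t. \<lambda>x. g x + t x"])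
qed

lemma bij: "bij_betw (\<lambda>c. the_elem (Av ` c)) (cohomology0 X deg dC Gc dG) (Av ` Zs)"
proof -
  let ?cs = "\<lambda>f. (\<lambda>t. \<lambda>x. f x + t x) ` Bs"
  have the: "the_elem (Av ` ?cs f) = Av f" for f by (simp add: coset_img)
  have inj: "inj_on (\<lambda>c. the_elem (Av ` c)) (?cs ` Zs)"
  proof (rule inj_onI)
    fix c1 c2 assume c: "c1 \<in> ?cs ` Zs" "c2 \<in> ?cs ` Zs" "the_elem (Av ` c1) = the_elem (Av ` c2)"
    then obtain f g where fg: "c1 = ?cs f" "c2 = ?cs g" by auto
    then have "Av f = Av g" using c(3) the by simp
    then have "(\<lambda>x. f x - g x) \<in> Bs" "(\<lambda>x. g x - f x) \<in> Bs" using Av_eq_iff by metis+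
    then have "?cs f = ?cs g" using coset_sub by blast
    then show "c1 = c2" using fg by simp
  qed
  have "(\<lambda>c. the_elem (Av ` c)) ` (?cs ` Zs) = (\<lambda>f. the_elem (Av ` ?cs f)) ` Zs"
    by (rule image_image)
  also have "\<dots> = Av ` Zs" by (intro image_cong refl the)
  finally have img: "(\<lambda>c. the_elem (Av ` c)) ` (?cs ` Zs) = Av ` Zs" .
  show ?thesis unfolding bij_betw_def cohomology0_def using inj img by simp
qed

end


theorem proposition5:
  fixes X :: "'x set" and deg :: "'x \<Rightarrow> int" and dC :: "'x \<Rightarrow> 'x \<Rightarrow> int"
    and Gc :: "int \<Rightarrow> 'g::ab_group_add set" and dG :: "int \<Rightarrow> 'g \<Rightarrow> 'g"
  assumes "chain_complex_C X deg dC"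
    and "chain_complex_G Gc dG"
  shows "\<not> module.dependent cscale ((\<lambda>f. A_total X deg dC Gc dG (ket f)) ` cocycles0 X deg dC Gc dG)
         \<and> module.span cscale ((\<lambda>f. A_total X deg dC Gc dG (ket f)) ` cocycles0 X deg dC Gc dG)
             = ground_space X deg dC Gc dG
         \<and> (\<forall>f\<in>cocycles0 X deg dC Gc dG. \<forall>g\<in>cocycles0 X deg dC Gc dG.
               A_total X deg dC Gc dG (ket f) = A_total X deg dC Gc dG (ket g)
                \<longleftrightarrow> (\<lambda>x. f x - g x) \<in> coboundaries0 X deg dC Gc dG)
         \<and> bij_betw (\<lambda>c. the_elem ((\<lambda>f. A_total X deg dC Gc dG (ket f)) ` c))
             (cohomology0 X deg dC Gc dG)
             ((\<lambda>f. A_total X deg dC Gc dG (ket f)) ` cocycles0 X deg dC Gc dG)"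
proof -
  interpret setting X deg dC Gc dG by unfold_locales (fact assms(1), fact assms(2))
  show ?thesis using indep span_eq Av_eq_iff bij by blast
qed

end
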